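(* Let $s$ be a strong divisor of a local ring $R$ that is not a unit, and let $S:=R_s$, so that $R\subset S$ is Prüfer. Set $P:=\bigcap_{n\in\mathbb N}Rs^n$. Then $P$ is a prime ideal of $R$ such that the set $\{Q\in\mathrm{Spec}(R): Q\subseteq P\}$ is open in $\mathrm{Spec}(R)$ (in fact equal to $\mathrm D(s)$); moreover $S=R_P$, $PS=P$, $P$ is a divided prime ideal of $R$ (i.e. comparable under inclusion to every ideal of $R$), and $R/P$ is a valuation domain whose quotient field is $S/P$.
   Context: All rings are commutative with identity; "local" means having a unique maximal ideal. A strong divisor of a local ring $R$ is a regular element $t\in R$ such that $Rt$ is comparable under inclusion with every ideal of $R$. $\mathrm D(s)=\{Q\in\mathrm{Spec}(R): s\notin Q\}$. An extension $A\subseteq B$ is Prüfer if $A\subseteq C$ is a flat epimorphism for each intermediate ring $C$. *)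

theory Defs
  imports Main
begin

text \<open>Commutative rings with identity are modelled by the type class comm_ring_1;
  the ring R is the whole type.\<close>

definition cr_ideal :: "'a::comm_ring_1 set \<Rightarrow> bool" where
  "cr_ideal I \<longleftrightarrow> 0 \<in> I \<and> (\<forall>x\<in>I. \<forall>y\<in>I. x + y \<in> I) \<and> (\<forall>r. \<forall>x\<in>I. r * x \<in> I)"

definition cr_prime_ideal :: "'a::comm_ring_1 set \<Rightarrow> bool" where
  "cr_prime_ideal P \<longleftrightarrow> cr_ideal P \<and> P \<noteq> UNIV \<and> (\<forall>x y. x * y \<in> P \<longrightarrow> x \<in> P \<or> y \<in> P)"

definition cr_maximal_ideal :: "'a::comm_ring_1 set \<Rightarrow> bool" where
  "cr_maximal_ideal M \<longleftrightarrow> cr_ideal M \<and> M \<noteq> UNIV \<and>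
     (\<forall>I. cr_ideal I \<and> M \<subseteq> I \<longrightarrow> I = M \<or> I = UNIV)"

definition cr_local :: "'a::comm_ring_1 itself \<Rightarrow> bool" where
  "cr_local (_ :: 'a itself) \<longleftrightarrow> (\<exists>!M :: 'a set. cr_maximal_ideal M)"

definition cr_unit :: "'a::comm_ring_1 \<Rightarrow> bool" where
  "cr_unit x \<longleftrightarrow> (\<exists>y. x * y = 1)"

definition cr_regular :: "'a::comm_ring_1 \<Rightarrow> bool" where
  "cr_regular t \<longleftrightarrow> (\<forall>x. t * x = 0 \<longrightarrow> x = 0)"

definition principal :: "'a::comm_ring_1 \<Rightarrow> 'a set" where
  "principal t = range (\<lambda>r. r * t)"

definition strong_divisor :: "'a::comm_ring_1 \<Rightarrow> bool" where
  "strong_divisor t \<longleftrightarrow> cr_regular t \<and>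
     (\<forall>I. cr_ideal I \<longrightarrow> principal t \<subseteq> I \<or> I \<subseteq> principal t)"

definition Spec :: "'a::comm_ring_1 set set" where
  "Spec = {Q. cr_prime_ideal Q}"

definition Dopen :: "'a::comm_ring_1 \<Rightarrow> 'a set set" where
  "Dopen s = {Q \<in> Spec. s \<notin> Q}"

definition zariski_open :: "'a::comm_ring_1 set set \<Rightarrow> bool" where
  "zariski_open U \<longleftrightarrow> (\<exists>I::'a set. U = {Q \<in> Spec. \<not> I \<subseteq> Q})"

definition divided_prime :: "'a::comm_ring_1 set \<Rightarrow> bool" where
  "divided_prime P \<longleftrightarrow> cr_prime_ideal P \<and> (\<forall>I. cr_ideal I \<longrightarrow> P \<subseteq> I \<or> I \<subseteq> P)"

definition cr_hom :: "('a::comm_ring_1 \<Rightarrow> 'b::comm_ring_1) \<Rightarrow> bool" where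
  "cr_hom f \<longleftrightarrow> f 1 = 1 \<and> (\<forall>x y. f (x + y) = f x + f y) \<and> (\<forall>x y. f (x * y) = f x * f y)"

text \<open>phi : R \<rightarrow> S is (isomorphic to) the canonical map R \<rightarrow> T^{-1} R, for a multiplicative
  subset T (standard characterisation of the localization).\<close>
definition is_localization :: "'a::comm_ring_1 set \<Rightarrow> ('a \<Rightarrow> 'b::comm_ring_1) \<Rightarrow> bool" where
  "is_localization T phi \<longleftrightarrow> cr_hom phi \<and> (\<forall>t\<in>T. cr_unit (phi t)) \<and>
     (\<forall>y. \<exists>r. \<exists>t\<in>T. y * phi t = phi r) \<and>
     (\<forall>r. phi r = 0 \<longleftrightarrow> (\<exists>t\<in>T. t * r = 0))"

definition powers :: "'a::comm_ring_1 \<Rightarrow> 'a set" where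
  "powers s = range (\<lambda>n. s ^ n)"

definition ideal_gen :: "'a::comm_ring_1 set \<Rightarrow> 'a set" where
  "ideal_gen A = \<Inter>{I. cr_ideal I \<and> A \<subseteq> I}"

text \<open>R/P valuation domain (P prime): for any x,y, one of their classes divides the other in R/P.\<close>
definition valuation_quotient :: "'a::comm_ring_1 set \<Rightarrow> bool" where
  "valuation_quotient P \<longleftrightarrow> cr_prime_ideal P \<and>
     (\<forall>x y. (\<exists>r. x - r * y \<in> P) \<or> (\<exists>r. y - r * x \<in> P))"

text \<open>Given phi : R \<rightarrow> S and an ideal J of S with phi^{-1}(J) = P, S/J is the quotient field of R/P:
  S/J is a field, R/P \<rightarrow> S/J is injective, and every class of S/J is a fraction of classes of R/P.\<close>
definition quotient_field_of :: "('a::comm_ring_1 \<Rightarrow> 'b::comm_ring_1) \<Rightarrow> 'a set \<Rightarrow> 'b set \<Rightarrow> bool" where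
  "quotient_field_of phi P J \<longleftrightarrow> cr_ideal J \<and> J \<noteq> UNIV \<and>
     (\<forall>y. y \<notin> J \<longrightarrow> (\<exists>z. y * z - 1 \<in> J)) \<and>
     (\<forall>r. phi r \<in> J \<longleftrightarrow> r \<in> P) \<and>
     (\<forall>y. \<exists>a b. b \<notin> P \<and> y * phi b - phi a \<in> J)"

end

theory Submission
  imports Defs
begin

lemma principal_mem: "x \<in> principal t \<longleftrightarrow> (\<exists>r. x = r * t)"
  unfolding principal_def by auto

lemma principal_ideal: "cr_ideal (principal t)"
  unfolding cr_ideal_def
proof (intro conjI ballI allI)
  show "0 \<in> principal t" unfolding principal_mem by (intro exI[of _ 0]) simp
next
  fix x y assume "x \<in> principal t" "y \<in> principal t"
  then obtain a b where "x = a * t" "y = b * t" unfolding principal_mem by blast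
  then have "x + y = (a + b) * t" by (simp add: distrib_right)
  then show "x + y \<in> principal t" unfolding principal_mem by blast
next
  fix r x assume "x \<in> principal t"
  then obtain a where "x = a * t" unfolding principal_mem by blast
  then have "r * x = (r * a) * t" by (simp add: mult.assoc)
  then show "r * x \<in> principal t" unfolding principal_mem by blast
qed

lemma regular_pow: "cr_regular s \<Longrightarrow> cr_regular (s ^ n)"
proof (induction n)
  case 0 then show ?case by (simp add: cr_regular_def)
next
  case (Suc n) show ?case
    unfolding cr_regular_def
  proof (intro allI impI)
    fix x assume "s ^ Suc n * x = 0"
    then have "s * (s ^ n * x) = 0" by (simp add: mult.assoc)
    then have "s ^ n * x = 0" using Suc.prems unfolding cr_regular_def by blast
    then show "x = 0" using Suc.IH Suc.prems unfolding cr_regular_def by blast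
  qed
qed

lemma strong_ideal_cmp:
  assumes "strong_divisor s"
  shows "r \<in> principal s \<or> s \<in> principal r"
proof -
  have "principal s \<subseteq> principal r \<or> principal r \<subseteq> principal s"
    using assms principal_ideal[of r] unfolding strong_divisor_def by blast
  moreover have "s \<in> principal s" "r \<in> principal r" unfolding principal_mem by (rule exI[of _ 1], simp)+
  ultimately show ?thesis by blast
qed

lemma dich_pow:
  assumes "strong_divisor s"
  shows "x \<in> principal (s ^ n) \<or> s ^ n \<in> principal x"
proof (induction n arbitrary: x)
  case 0 then show ?case by (simp add: principal_mem)
next
  case (Suc n)
  show ?case
  proof (cases "s ^ n \<in> principal x")
    case True
    then obtain c where "s ^ n = c * x" by (auto simp: principal_mem)
    then have "s ^ Suc n = (s * c) * x" by (simp add: mult.assoc)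
    then show ?thesis by (auto simp: principal_mem)
  next
    case False
    with Suc obtain r where r: "x = r * s ^ n" by (auto simp: principal_mem)
    from strong_ideal_cmp[OF assms, of r] show ?thesis
    proof
      assume "r \<in> principal s"
      then obtain d where "r = d * s" by (auto simp: principal_mem)
      then have "x = d * s ^ Suc n" using r by (simp add: mult.assoc mult.commute mult.left_commute)
      then show ?thesis by (auto simp: principal_mem)
    next
      assume "s \<in> principal r"
      then obtain c where "s = c * r" by (auto simp: principal_mem)
      then have "s ^ Suc n = c * x" using r by (simp add: mult.assoc)
      then show ?thesis by (auto simp: principal_mem)
    qed
  qed
qed

lemma pow_not_in_next:
  assumes "cr_regular s" "\<not> cr_unit s"
  shows "s ^ n \<notin> principal (s ^ Suc n)"
proof
  assume "s ^ n \<in> principal (s ^ Suc n)"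
  then obtain r where r: "s ^ n = r * s ^ Suc n" by (auto simp: principal_mem)
  have "s ^ n * (1 - s * r) = 0" using r by (simp add: algebra_simps)
  then have "1 - s * r = 0" using regular_pow[OF assms(1), of n] unfolding cr_regular_def by blast
  then have "s * r = 1" by simp
  then show False using assms(2) unfolding cr_unit_def by blast
qed

lemma hom_basic:
  assumes "cr_hom phi"
  shows "phi 0 = 0" "phi (a - b) = phi a - phi b" "phi (x ^ n) = phi x ^ n"
proof -
  have h: "\<And>x y. phi (x + y) = phi x + phi y" "\<And>x y. phi (x * y) = phi x * phi y" "phi 1 = 1"
    using assms unfolding cr_hom_def by auto
  have "phi 0 = phi 0 + phi 0" using h(1)[of 0 0] by simp
  then show z: "phi 0 = 0" by simp
  have "phi (a - b) + phi b = phi a" using h(1)[of "a - b" b] by simp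
  then show "phi (a - b) = phi a - phi b" by (simp add: eq_diff_eq)
  show "phi (x ^ n) = phi x ^ n" by (induction n) (simp_all add: h)
qed

theorem mainTheorem8:
  fixes s :: "'a::comm_ring_1" and phi :: "'a \<Rightarrow> 'b::comm_ring_1"
  assumes "cr_local TYPE('a)"
    and "strong_divisor s"
    and "\<not> cr_unit s"
    and "is_localization (powers s) phi"
    and "P = (\<Inter>n. principal (s ^ n))"
  shows "cr_prime_ideal P
    \<and> zariski_open {Q \<in> Spec. Q \<subseteq> P}
    \<and> {Q \<in> Spec. Q \<subseteq> P} = Dopen s
    \<and> is_localization (- P) phi
    \<and> ideal_gen (phi ` P) = phi ` P
    \<and> divided_prime P
    \<and> valuation_quotient P
    \<and> quotient_field_of phi P (phi ` P)"
proof -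
  have reg: "cr_regular s" and sd: "strong_divisor s" using assms(2) unfolding strong_divisor_def by auto
  have Pmem: "\<And>x. x \<in> P \<longleftrightarrow> (\<forall>n. x \<in> principal (s ^ n))" using assms(5) by auto
  have Pideal: "cr_ideal P"
  proof -
    have "\<And>n. cr_ideal (principal (s ^ n))" by (rule principal_ideal)
    then have "\<And>n. 0 \<in> principal (s ^ n)" "\<And>n x y. x \<in> principal (s ^ n) \<Longrightarrow> y \<in> principal (s ^ n) \<Longrightarrow> x + y \<in> principal (s ^ n)"
      "\<And>n r x. x \<in> principal (s ^ n) \<Longrightarrow> r * x \<in> principal (s ^ n)" unfolding cr_ideal_def by auto
    then show ?thesis unfolding cr_ideal_def by (auto simp: Pmem)
  qed
  have P0: "0 \<in> P" and Padd: "\<And>x y. x \<in> P \<Longrightarrow> y \<in> P \<Longrightarrow> x + y \<in> P"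
    and Pmul: "\<And>r x. x \<in> P \<Longrightarrow> r * x \<in> P" using Pideal unfolding cr_ideal_def by auto
  have spow_notP: "\<And>n. s ^ n \<notin> P"
    using pow_not_in_next[OF reg assms(3)] Pmem by blast
  have dich: "\<And>x. x \<notin> P \<Longrightarrow> \<exists>n c. s ^ n = c * x"
  proof -
    fix x assume "x \<notin> P"
    then obtain n where "x \<notin> principal (s ^ n)" using Pmem by blast
    then have "s ^ n \<in> principal x" using dich_pow[OF sd] by blast
    then show "\<exists>n c. s ^ n = c * x" by (auto simp: principal_mem)
  qed
  have Pdiv: "\<And>p n. p \<in> P \<Longrightarrow> \<exists>q\<in>P. p = s ^ n * q"
  proof -
    fix p n assume p: "p \<in> P"
    have "p \<in> principal (s ^ n)" using p Pmem by blast
    then obtain q where q: "p = q * s ^ n" by (auto simp: principal_mem)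
    have "q \<in> principal (s ^ k)" for k
    proof -
      have "p \<in> principal (s ^ (n + k))" using p Pmem by blast
      then obtain r where r: "p = r * s ^ (n + k)" by (auto simp: principal_mem)
      have "s ^ n * (r * s ^ k - q) = 0" using q r by (simp add: algebra_simps power_add)
      then have "r * s ^ k - q = 0" using regular_pow[OF reg, of n] unfolding cr_regular_def by blast
      then show ?thesis by (auto simp: principal_mem)
    qed
    then show "\<exists>q\<in>P. p = s ^ n * q" using q Pmem by (auto simp: mult.commute)
  qed
  have prime: "cr_prime_ideal P"
    unfolding cr_prime_ideal_def
  proof (intro conjI allI impI)
    show "cr_ideal P" by (rule Pideal)
    show "P \<noteq> UNIV" using spow_notP[of 0] by auto
    fix x y assume xy: "x * y \<in> P"
    show "x \<in> P \<or> y \<in> P"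
    proof (rule ccontr)
      assume "\<not> (x \<in> P \<or> y \<in> P)"
      then obtain a b u v where "s ^ a = u * x" "s ^ b = v * y" using dich by blast
      then have "s ^ (a + b) = (u * v) * (x * y)" by (simp add: power_add algebra_simps)
      then have "s ^ (a + b) \<in> P" using Pmul xy by simp
      then show False using spow_notP by blast
    qed
  qed
  have powQ: "\<And>Q n. cr_prime_ideal Q \<Longrightarrow> s ^ n \<in> Q \<Longrightarrow> s \<in> Q"
  proof -
    fix Q :: "'a set" and n assume Q: "cr_prime_ideal Q" and sn: "s ^ n \<in> Q"
    then show "s \<in> Q"
    proof (induction n)
      case 0
      then have "1 \<in> Q" by simp
      then have "\<forall>r. r \<in> Q" using Q unfolding cr_prime_ideal_def cr_ideal_def by (metis mult_1_right)
      then show ?case using Q unfolding cr_prime_ideal_def by auto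
    next
      case (Suc n)
      then show ?case using Q unfolding cr_prime_ideal_def by auto
    qed
  qed
  have sP: "s \<notin> P" using spow_notP[of 1] by simp
  have eqD: "{Q \<in> Spec. Q \<subseteq> P} = Dopen s"
  proof (rule set_eqI, rule iffI)
    fix Q assume "Q \<in> {Q \<in> Spec. Q \<subseteq> P}"
    then show "Q \<in> Dopen s" using sP unfolding Dopen_def by auto
  next
    fix Q assume Q: "Q \<in> Dopen s"
    then have Qp: "cr_prime_ideal Q" and sQ: "s \<notin> Q" unfolding Dopen_def Spec_def by auto
    have "Q \<subseteq> P"
    proof
      fix x assume x: "x \<in> Q"
      show "x \<in> P"
      proof (rule ccontr)
        assume "x \<notin> P"
        then obtain n c where "s ^ n = c * x" using dich by blast
        then have "s ^ n \<in> Q" using x Qp unfolding cr_prime_ideal_def cr_ideal_def by auto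
        then show False using powQ Qp sQ by blast
      qed
    qed
    then show "Q \<in> {Q \<in> Spec. Q \<subseteq> P}" using Qp unfolding Spec_def by auto
  qed
  have zar: "zariski_open {Q \<in> Spec. Q \<subseteq> P}"
    unfolding eqD zariski_open_def Dopen_def by (rule exI[of _ "{s}"]) auto
  have divided: "divided_prime P"
    unfolding divided_prime_def
  proof (intro conjI allI impI)
    show "cr_prime_ideal P" by (rule prime)
    fix I :: "'a set" assume I: "cr_ideal I"
    show "P \<subseteq> I \<or> I \<subseteq> P"
    proof (cases "I \<subseteq> P")
      case False
      then obtain x where x: "x \<in> I" "x \<notin> P" by blast
      then obtain n c where sn: "s ^ n = c * x" using dich by blast
      have "P \<subseteq> I"
      proof
        fix p assume "p \<in> P"
        then have "p \<in> principal (s ^ n)" using Pmem by blast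
        then obtain r where "p = r * s ^ n" by (auto simp: principal_mem)
        then have "p = (r * c) * x" using sn by (simp add: mult.assoc)
        then show "p \<in> I" using I x unfolding cr_ideal_def by auto
      qed
      then show ?thesis by blast
    qed simp
  qed
  have val: "valuation_quotient P"
    unfolding valuation_quotient_def
  proof (intro conjI allI)
    show "cr_prime_ideal P" by (rule prime)
    fix x y
    show "(\<exists>r. x - r * y \<in> P) \<or> (\<exists>r. y - r * x \<in> P)"
    proof (cases "x \<in> P \<or> y \<in> P")
      case True
      then show ?thesis
      proof
        assume "x \<in> P" then have "x - 0 * y \<in> P" by simp
        then show ?thesis by blast
      next
        assume "y \<in> P" then have "y - 0 * x \<in> P" by simp
        then show ?thesis by blast
      qed
    next
      case False
      then obtain m c where sm: "s ^ m = c * y" using dich by blast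
      have cP: "c \<notin> P"
      proof
        assume "c \<in> P"
        then have "y * c \<in> P" by (rule Pmul)
        then have "s ^ m \<in> P" using sm by (simp add: mult.commute)
        then show False using spow_notP by blast
      qed
      have primeP: "\<And>a b. a * b \<in> P \<Longrightarrow> a \<in> P \<or> b \<in> P" using prime unfolding cr_prime_ideal_def by blast
      have cpr: "\<And>z. c * z = 0 \<Longrightarrow> z \<in> P"
      proof -
        fix z assume "c * z = 0"
        then have "c * z \<in> P" using P0 by simp
        then show "z \<in> P" using primeP cP by blast
      qed
      from dich_pow[OF sd, of "x * c" m] show ?thesis
      proof
        assume "x * c \<in> principal (s ^ m)"
        then obtain d where "x * c = d * s ^ m" by (auto simp: principal_mem)
        then have "c * (x - d * y) = 0" using sm by (simp add: algebra_simps)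
        then show ?thesis using cpr by blast
      next
        assume "s ^ m \<in> principal (x * c)"
        then obtain e where "s ^ m = e * (x * c)" by (auto simp: principal_mem)
        then have "c * (y - e * x) = 0" using sm by (simp add: algebra_simps)
        then show ?thesis using cpr by blast
      qed
    qed
  qed
  have hom: "cr_hom phi" and unitp: "\<And>n. cr_unit (phi (s ^ n))"
    and surj: "\<And>y. \<exists>r n. y * phi (s ^ n) = phi r"
    and ker: "\<And>r. phi r = 0 \<longleftrightarrow> (\<exists>n. s ^ n * r = 0)"
    using assms(4) unfolding is_localization_def powers_def by auto
  have hadd: "\<And>a b. phi (a + b) = phi a + phi b" and hmul: "\<And>a b. phi (a * b) = phi a * phi b"
    and h1: "phi 1 = 1" using hom unfolding cr_hom_def by auto
  note hb = hom_basic[OF hom]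
  have inj: "\<And>a b. phi a = phi b \<Longrightarrow> a = b"
  proof -
    fix a b assume "phi a = phi b"
    then have "phi (a - b) = 0" using hb by simp
    then obtain n where "s ^ n * (a - b) = 0" using ker by blast
    then have "a - b = 0" using regular_pow[OF reg, of n] unfolding cr_regular_def by blast
    then show "a = b" by simp
  qed
  have kerP: "\<And>r. phi r = 0 \<longleftrightarrow> (\<exists>t\<in>-P. t * r = 0)"
  proof
    fix r assume "phi r = 0"
    then obtain n where "s ^ n * r = 0" using ker by blast
    then show "\<exists>t\<in>-P. t * r = 0" using spow_notP by blast
  next
    fix r assume "\<exists>t\<in>-P. t * r = 0"
    then obtain t where t: "t \<notin> P" "t * r = 0" by auto
    then obtain n c where "s ^ n = c * t" using dich by blast
    then have "s ^ n * r = 0" using t by (simp add: mult.assoc)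
    then show "phi r = 0" using ker by blast
  qed
  have locP: "is_localization (- P) phi"
    unfolding is_localization_def
  proof (intro conjI ballI allI)
    show "cr_hom phi" by (rule hom)
    fix t assume "t \<in> - P"
    then obtain n c where sn: "s ^ n = c * t" using dich by blast
    obtain w where "phi (s ^ n) * w = 1" using unitp unfolding cr_unit_def by blast
    then have "phi t * (phi c * w) = 1" using sn hmul by (simp add: algebra_simps)
    then show "cr_unit (phi t)" unfolding cr_unit_def by blast
  next
    fix y
    obtain r n where "y * phi (s ^ n) = phi r" using surj by blast
    then show "\<exists>r. \<exists>t\<in>- P. y * phi t = phi r" using spow_notP by blast
  next
    fix r show "phi r = 0 \<longleftrightarrow> (\<exists>t\<in>-P. t * r = 0)" by (rule kerP)
  qed
  have Jideal: "cr_ideal (phi ` P)"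
    unfolding cr_ideal_def
  proof (intro conjI ballI allI)
    show "0 \<in> phi ` P" using P0 hb by (metis image_eqI)
  next
    fix a b assume "a \<in> phi ` P" "b \<in> phi ` P"
    then obtain p q where "p \<in> P" "q \<in> P" "a = phi p" "b = phi q" by auto
    then show "a + b \<in> phi ` P" using Padd hadd by (metis image_eqI)
  next
    fix y a assume "a \<in> phi ` P"
    then obtain p where p: "p \<in> P" "a = phi p" by auto
    obtain r n where rn: "y * phi (s ^ n) = phi r" using surj by blast
    obtain q where q: "q \<in> P" "p = s ^ n * q" using Pdiv p by blast
    have "y * a = (y * phi (s ^ n)) * phi q" using p q hmul by (simp add: mult.assoc)
    then have "y * a = phi (r * q)" using rn hmul by simp
    then show "y * a \<in> phi ` P" using Pmul q by blast
  qed
  have gen: "ideal_gen (phi ` P) = phi ` P"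
    unfolding ideal_gen_def
  proof
    show "\<Inter>{I. cr_ideal I \<and> phi ` P \<subseteq> I} \<subseteq> phi ` P" using Jideal by (intro Inter_lower) simp
    show "phi ` P \<subseteq> \<Inter>{I. cr_ideal I \<and> phi ` P \<subseteq> I}" by (rule Inter_greatest) simp
  qed
  have qf: "quotient_field_of phi P (phi ` P)"
    unfolding quotient_field_of_def
  proof (intro conjI allI impI)
    show "cr_ideal (phi ` P)" by (rule Jideal)
    show "phi ` P \<noteq> UNIV"
    proof
      assume "phi ` P = UNIV"
      then have "1 \<in> phi ` P" by simp
      then obtain p where "p \<in> P" "phi p = phi 1" using h1 by auto
      then have "p = 1" by (intro inj)
      then show False using spow_notP[of 0] \<open>p \<in> P\<close> by simp
    qed
  next
    fix y assume y: "y \<notin> phi ` P"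
    obtain r n where rn: "y * phi (s ^ n) = phi r" using surj by blast
    obtain w where w: "phi (s ^ n) * w = 1" using unitp unfolding cr_unit_def by blast
    have rP: "r \<notin> P"
    proof
      assume "r \<in> P"
      then obtain q where q: "q \<in> P" "r = s ^ n * q" using Pdiv by blast
      then have "y * phi (s ^ n) = phi (s ^ n) * phi q" using rn hmul by simp
      then have "y * (phi (s ^ n) * w) = phi q * (phi (s ^ n) * w)" by (metis mult.commute mult.left_commute)
      then have "y = phi q" using w by simp
      then show False using y q by blast
    qed
    then obtain m c where sm: "s ^ m = c * r" using dich by blast
    obtain v where v: "phi (s ^ m) * v = 1" using unitp unfolding cr_unit_def by blast
    have "phi (s ^ m) = phi c * phi r" using sm hmul by simp
    also have "\<dots> = phi c * (y * phi (s ^ n))" using rn by simp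
    finally have "y * (phi (s ^ n) * phi c * v) = phi (s ^ m) * v" by (simp add: algebra_simps)
    then have "y * (phi (s ^ n) * phi c * v) = 1" using v by simp
    then have "y * (phi (s ^ n) * phi c * v) - 1 \<in> phi ` P" using Jideal unfolding cr_ideal_def by simp
    then show "\<exists>z. y * z - 1 \<in> phi ` P" by blast
  next
    fix r show "phi r \<in> phi ` P \<longleftrightarrow> r \<in> P"
    proof
      assume "phi r \<in> phi ` P"
      then obtain p where p: "p \<in> P" "phi r = phi p" by auto
      then have "r = p" by (intro inj)
      then show "r \<in> P" using p by simp
    qed simp
  next
    fix y
    obtain r n where rn: "y * phi (s ^ n) = phi r" using surj by blast
    then have "y * phi (s ^ n) - phi r \<in> phi ` P" using Jideal unfolding cr_ideal_def by simp
    then show "\<exists>a b. b \<notin> P \<and> y * phi b - phi a \<in> phi ` P" using spow_notP by blast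
  qed
  show ?thesis by (intro conjI prime zar eqD locP gen divided val qf)
qed

end
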